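(* Let $T$ be an invertible operator in $\mathcal D(\mathcal P_n)$. Then for every nonconstant $f\in\mathcal P_n$ and every $v\in Z(Tf)$ there exists $u\in Z(f)$ with $|v-u|\le\varrho[T\phi_n]$.
   Context: Let $n\ge 1$ be an integer and $\mathcal P_n$ the complex vector space of polynomials in one complex variable of degree at most $n$; $\phi_k(z)=z^k/k!$. $D$ is differentiation on $\mathcal P_n$, $I$ the identity, and $\mathcal D(\mathcal P_n)$ the linear span of $I,D,\dots,D^n$. For a nonzero $f$, $Z(f)$ is the multiset of roots of $f$ (with multiplicity). For nonconstant $f$, the root radius is $\varrho[f]=\max\{|u|:u\in Z(f)\}$. *)

theory Defs
  imports "HOL-Computational_Algebra.Polynomial" Complex_Main
begin

definition Pn :: "nat \<Rightarrow> complex poly set" where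
  "Pn n = {f. degree f \<le> n}"

text \<open>The operator T = sum_{k=0}^n c_k D^k in D(P_n), D = differentiation.\<close>
definition diffop :: "nat \<Rightarrow> (nat \<Rightarrow> complex) \<Rightarrow> complex poly \<Rightarrow> complex poly" where
  "diffop n c f = (\<Sum>k\<le>n. smult (c k) ((pderiv ^^ k) f))"

definition phi :: "nat \<Rightarrow> complex poly" where
  "phi k = monom (1 / of_nat (fact k)) k"

definition Z :: "complex poly \<Rightarrow> complex set" where
  "Z f = {u. poly f u = 0}"

definition root_radius :: "complex poly \<Rightarrow> real" where
  "root_radius f = Max (norm ` Z f)"

end

theory Submission imports Defs "HOL-Computational_Algebra.Fundamental_Theorem_Algebra" "HOL-Analysis.Analysis"
begin

lemma factor_list:
  fixes p :: "complex poly"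
  assumes "p \<noteq> 0"
  obtains rs where "p = smult (lead_coeff p) (\<Prod>x\<leftarrow>rs. [:-x, 1:])"
    "length rs = degree p" "\<And>r. r \<in> set rs \<Longrightarrow> poly p r = 0"
proof -
  obtain rs where rs: "mset rs = proots p"
    using ex_mset by blast
  have "p = smult (lead_coeff p) (\<Prod>x\<in>#proots p. [:-x, 1:])"
    by (rule complex_poly_decompose_multiset [symmetric])
  also have "(\<Prod>x\<in>#proots p. [:-x, 1:]) = (\<Prod>x\<leftarrow>rs. [:-x, 1:])"
    by (subst prod_mset_prod_list [symmetric]) (simp add: rs)
  finally have 1: "p = smult (lead_coeff p) (\<Prod>x\<leftarrow>rs. [:-x, 1:])" .
  have 2: "length rs = degree p"
    using rs size_proots_complex[of p] by (metis size_mset)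
  have 3: "poly p r = 0" if "r \<in> set rs" for r
    using that rs assms by (metis mem_Collect_eq set_count_proots set_mset_mset)
  show ?thesis using 1 2 3 that by blast
qed

definition B :: "nat \<Rightarrow> complex poly \<Rightarrow> complex poly \<Rightarrow> complex" where
  "B m p g = (\<Sum>k\<le>m. fact k * fact (m - k) * coeff p k * coeff g k)"

definition Aop :: "complex \<Rightarrow> nat \<Rightarrow> complex poly \<Rightarrow> complex poly" where
  "Aop z m g = smult (of_nat m) g + [:z, -1:] * pderiv g"

lemma coeff_Aop:
  "coeff (Aop z m g) k = (of_nat m - of_nat k) * coeff g k + z * of_nat (Suc k) * coeff g (Suc k)"
proof (cases k)
  case 0
  then show ?thesis by (simp add: Aop_def coeff_pderiv mult_pCons_left)
next
  case (Suc j)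
  then show ?thesis by (simp add: Aop_def coeff_pderiv mult_pCons_left algebra_simps)
qed

lemma degree_Aop:
  assumes "degree g \<le> Suc m"
  shows "degree (Aop z (Suc m) g) \<le> m"
proof (rule degree_le, intro allI impI)
  fix k assume "m < k"
  then show "coeff (Aop z (Suc m) g) k = 0"
    using assms by (cases "k = Suc m") (auto simp: coeff_Aop coeff_eq_0)
qed

lemma B_step:
  assumes "degree E \<le> m"
  shows "B (Suc m) ([:1, z:] * E) g = B m E (Aop z (Suc m) g)"
proof -
  have c: "coeff ([:1, z:] * E) k = coeff E k + z * (case k of 0 \<Rightarrow> 0 | Suc j \<Rightarrow> coeff E j)" for k
    by (cases k) (simp_all add: mult_pCons_left)
  have "B (Suc m) ([:1, z:] * E) g =
      (\<Sum>k\<le>Suc m. fact k * fact (Suc m - k) * coeff E k * coeff g k)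
    + (\<Sum>k\<le>Suc m. fact k * fact (Suc m - k) * z * (case k of 0 \<Rightarrow> 0 | Suc j \<Rightarrow> coeff E j) * coeff g k)"
    unfolding B_def c by (simp add: algebra_simps sum.distrib)
  also have "(\<Sum>k\<le>Suc m. fact k * fact (Suc m - k) * coeff E k * coeff g k)
     = (\<Sum>k\<le>m. fact k * fact (Suc m - k) * coeff E k * coeff g k)"
    using assms by (simp add: coeff_eq_0)
  also have "(\<Sum>k\<le>Suc m. fact k * fact (Suc m - k) * z * (case k of 0 \<Rightarrow> 0 | Suc j \<Rightarrow> coeff E j) * coeff g k)
     = (\<Sum>k\<le>m. fact (Suc k) * fact (m - k) * z * coeff E k * coeff g (Suc k))"
    by (subst sum.atMost_Suc_shift) simp
  also have "(\<Sum>k\<le>m. fact k * fact (Suc m - k) * coeff E k * coeff g k)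
      + (\<Sum>k\<le>m. fact (Suc k) * fact (m - k) * z * coeff E k * coeff g (Suc k))
      = B m E (Aop z (Suc m) g)"
  proof -
    have "fact k * fact (Suc m - k) * coeff E k * coeff g k
        + fact (Suc k) * fact (m - k) * z * coeff E k * coeff g (Suc k)
        = fact k * fact (m - k) * coeff E k * coeff (Aop z (Suc m) g) k" if "k \<le> m" for k
    proof -
      have "Suc m - k = Suc (m - k)" using that by simp
      hence f: "(fact (Suc m - k) :: complex) = (of_nat (Suc m) - of_nat k) * fact (m - k)"
        using that by (simp add: of_nat_diff)
      show ?thesis unfolding coeff_Aop f by (simp add: algebra_simps)
    qed
    thus ?thesis unfolding B_def sum.distrib[symmetric] by (intro sum.cong) auto
  qed
  finally show ?thesis .
qed


definition Qf :: "real \<Rightarrow> complex \<Rightarrow> complex \<Rightarrow> real" where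
  "Qf r w x = (r\<^sup>2 - (cmod w)\<^sup>2) * (cmod x)\<^sup>2 + 2 * Re (w * x)"

lemma norm_sq_expand: "(cmod (w * x - 1))\<^sup>2 = (cmod w)\<^sup>2 * (cmod x)\<^sup>2 - 2 * Re (w * x) + 1"
  unfolding cmod_power2 by (simp add: power2_eq_square algebra_simps)

lemma Qf_iff:
  assumes "x \<noteq> 0" "r \<ge> 0"
  shows "Qf r w x < 1 \<longleftrightarrow> r < cmod (w - 1 / x)"
proof -
  have e: "w - 1 / x = (w * x - 1) / x" using assms by (simp add: field_simps)
  have "r < cmod (w - 1 / x) \<longleftrightarrow> r * cmod x < cmod (w * x - 1)"
    using assms unfolding e by (simp add: norm_divide pos_less_divide_eq)
  also have "\<dots> \<longleftrightarrow> (r * cmod x)\<^sup>2 < (cmod (w * x - 1))\<^sup>2"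
    using assms by (meson mult_nonneg_nonneg norm_ge_zero power_less_imp_less_base power_strict_mono zero_less_numeral)
  also have "\<dots> \<longleftrightarrow> Qf r w x < 1"
    unfolding norm_sq_expand Qf_def by (simp add: power_mult_distrib algebra_simps)
  finally show ?thesis by simp
qed

lemma convex_Qf:
  assumes "cmod w \<le> r"
  shows "convex {x. Qf r w x < 1}"
proof (rule convexI, simp)
  fix x y :: complex and u v :: real
  assume x: "Qf r w x < 1" and y: "Qf r w y < 1" and u: "0 \<le> u" and v: "0 \<le> v" and uv: "u + v = 1"
  have a: "r\<^sup>2 - (cmod w)\<^sup>2 \<ge> 0"
    using assms norm_ge_zero by (metis diff_ge_0_iff_ge power_mono)
  have sq: "(u * p + v * q)\<^sup>2 \<le> u * p\<^sup>2 + v * q\<^sup>2" for p q :: real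
  proof -
    have "u * p\<^sup>2 + v * q\<^sup>2 - (u * p + v * q)\<^sup>2 = u * v * (p - q)\<^sup>2"
    proof -
      have v': "v = 1 - u" using uv by simp
      show ?thesis unfolding v' by (simp add: power2_eq_square algebra_simps)
    qed
    moreover have "u * v * (p - q)\<^sup>2 \<ge> 0" using u v by simp
    ultimately show ?thesis by linarith
  qed
  have n: "(cmod (u *\<^sub>R x + v *\<^sub>R y))\<^sup>2 \<le> u * (cmod x)\<^sup>2 + v * (cmod y)\<^sup>2"
  proof -
    have "(cmod (u *\<^sub>R x + v *\<^sub>R y))\<^sup>2 = (u * Re x + v * Re y)\<^sup>2 + (u * Im x + v * Im y)\<^sup>2"
      unfolding cmod_power2 by simp
    also have "\<dots> \<le> (u * (Re x)\<^sup>2 + v * (Re y)\<^sup>2) + (u * (Im x)\<^sup>2 + v * (Im y)\<^sup>2)"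
      using sq[of "Re x" "Re y"] sq[of "Im x" "Im y"] by linarith
    also have "\<dots> = u * (cmod x)\<^sup>2 + v * (cmod y)\<^sup>2"
      unfolding cmod_power2 by (simp add: algebra_simps)
    finally show ?thesis .
  qed
  have "Qf r w (u *\<^sub>R x + v *\<^sub>R y) \<le> u * Qf r w x + v * Qf r w y"
  proof -
    have "Qf r w (u *\<^sub>R x + v *\<^sub>R y) \<le> (r\<^sup>2 - (cmod w)\<^sup>2) * (u * (cmod x)\<^sup>2 + v * (cmod y)\<^sup>2)
        + 2 * Re (w * (u *\<^sub>R x + v *\<^sub>R y))"
      unfolding Qf_def using mult_left_mono[OF n a] by linarith
    also have "\<dots> = u * Qf r w x + v * Qf r w y"
      unfolding Qf_def by (simp add: algebra_simps scaleR_conv_of_real)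
    finally show ?thesis .
  qed
  also have "\<dots> < 1"
  proof -
    have "u * Qf r w x \<le> u * 1" using x u by (intro mult_left_mono) auto
    moreover have "v * Qf r w y \<le> v * 1" using y v by (intro mult_left_mono) auto
    moreover have "u * Qf r w x < u * 1 \<or> v * Qf r w y < v * 1"
      using x y uv u v by (cases "u = 0") auto
    ultimately show ?thesis using uv by linarith
  qed
  finally show "Qf r w (u *\<^sub>R x + v *\<^sub>R y) < 1" .
qed

lemma logderiv_prod:
  fixes us :: "complex list"
  assumes "\<And>u. u \<in> set us \<Longrightarrow> w \<noteq> u"
  shows "poly (pderiv (\<Prod>u\<leftarrow>us. [:-u, 1:])) w
       = poly (\<Prod>u\<leftarrow>us. [:-u, 1:]) w * (\<Sum>u\<leftarrow>us. 1 / (w - u))"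
  using assms
proof (induction us)
  case Nil
  then show ?case by simp
next
  case (Cons u us)
  have wu: "w - u \<noteq> 0" using Cons.prems by auto
  define q where "q = (\<Prod>u\<leftarrow>us. [:-u, 1:])"
  define S where "S = (\<Sum>u\<leftarrow>us. 1 / (w - u))"
  have IH: "poly (pderiv q) w = poly q w * S" using Cons unfolding q_def S_def by simp
  have d: "pderiv ([:-u, 1:] * q) = q + [:-u, 1:] * pderiv q"
    unfolding pderiv_mult by (simp add: pderiv_pCons)
  have "poly (pderiv ([:-u, 1:] * q)) w = poly q w + (w - u) * (poly q w * S)"
    unfolding d by (simp add: IH algebra_simps)
  also have "\<dots> = (w - u) * poly q w * (1 / (w - u) + S)"
    using wu by (simp add: field_simps)
  finally have X: "poly (pderiv ([:-u, 1:] * q)) w = (w - u) * poly q w * (1 / (w - u) + S)" .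
  have e1: "(\<Prod>u\<leftarrow>u#us. [:-u, 1:]) = [:-u, 1:] * q" by (simp add: q_def)
  have e2: "poly ([:-u, 1:] * q) w = (w - u) * poly q w" by (simp add: algebra_simps)
  have e3: "(\<Sum>u\<leftarrow>u#us. 1 / (w - u)) = 1 / (w - u) + S" by (simp add: S_def)
  show ?case unfolding e1 e2 e3 using X .
qed


lemma sum_if_less:
  fixes L M :: nat
  assumes "L \<le> M"
  shows "(\<Sum>i<M. if i < L then a i else 0) = (\<Sum>i<L. a i)"
  apply (rule sum.mono_neutral_cong_right)
  using assms by auto

lemma laguerre:
  fixes g :: "complex poly"
  assumes dg: "degree g \<le> Suc m" and ng: "\<forall>w. cmod w \<le> r \<longrightarrow> poly g w \<noteq> 0"
    and z: "cmod z \<le> r" and r: "r \<ge> 0"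
  shows "\<forall>w. cmod w \<le> r \<longrightarrow> poly (Aop z (Suc m) g) w \<noteq> 0"
proof (intro allI impI notI)
  fix w assume w: "cmod w \<le> r" and A0: "poly (Aop z (Suc m) g) w = 0"
  have "g \<noteq> 0" using ng r by (metis norm_zero poly_0)
  then obtain us where us: "g = smult (lead_coeff g) (\<Prod>x\<leftarrow>us. [:-x, 1:])"
    "length us = degree g" "\<And>u. u \<in> set us \<Longrightarrow> poly g u = 0"
    using factor_list by blast
  have uout: "r < cmod u" if "u \<in> set us" for u
    using us(3)[OF that] ng by force
  have wu: "w \<noteq> u" if "u \<in> set us" for u using uout[OF that] w by auto
  define P where "P = (\<Prod>x\<leftarrow>us. [:-x, 1:])"
  define S where "S = (\<Sum>u\<leftarrow>us. 1 / (w - u))"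
  define lc where "lc = lead_coeff g"
  have gP: "g = smult lc P" using us(1) unfolding P_def lc_def .
  have gw: "poly g w \<noteq> 0" using ng w by blast
  have dP: "poly (pderiv P) w = poly P w * S"
    unfolding P_def S_def using logderiv_prod wu by blast
  have dg': "poly (pderiv g) w = poly g w * S"
    unfolding gP by (simp add: pderiv_smult dP)
  have "poly (Aop z (Suc m) g) w = poly g w * (of_nat (Suc m) + (z - w) * S)"
    unfolding Aop_def by (simp add: dg' algebra_simps)
  with A0 gw have eq: "of_nat (Suc m) + (z - w) * S = 0" by simp
  define y where "y = S / of_nat (Suc m)"
  have nz: "(of_nat (Suc m)::complex) \<noteq> 0" by (simp only: of_nat_eq_0_iff)
  hence nz': "1 + (of_nat m::complex) \<noteq> 0" by (simp add: add.commute)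
  have wy: "(w - z) * y = 1"
    using eq nz nz' unfolding y_def by (simp add: field_simps)
  hence y0: "y \<noteq> 0" by auto
  have zy: "z = w - 1 / y" using wy y0 by (simp add: field_simps)
  have notin: "\<not> Qf r w y < 1"
    using Qf_iff[OF y0 r, of w] z zy by simp
  define D where "D = {x. Qf r w x < 1}"
  have cD: "convex D" unfolding D_def using convex_Qf w by blast
  define xs where "xs = (\<lambda>i. if i < length us then 1 / (w - us ! i) else 0)"
  have xsD: "xs i \<in> D" for i
  proof (cases "i < length us")
    case True
    hence u: "us ! i \<in> set us" by simp
    have x0: "1 / (w - us ! i) \<noteq> 0" using wu[OF u] by simp
    have "r < cmod (w - 1 / (1 / (w - us ! i)))" using uout[OF u] by simp
    hence "Qf r w (1 / (w - us ! i)) < 1" using Qf_iff[OF x0 r] by simp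
    then show ?thesis using True unfolding D_def xs_def by simp
  next
    case False
    then show ?thesis unfolding D_def xs_def Qf_def by simp
  qed
  have "(\<Sum>i<Suc m. (1 / real (Suc m)) *\<^sub>R xs i) \<in> D"
    by (rule convex_sum[OF _ cD]) (auto simp: xsD)
  moreover have "(\<Sum>i<Suc m. (1 / real (Suc m)) *\<^sub>R xs i) = y"
  proof -
    have "(\<Sum>i<Suc m. (1 / real (Suc m)) *\<^sub>R xs i) = (1 / real (Suc m)) *\<^sub>R (\<Sum>i<Suc m. xs i)"
      by (simp only: scaleR_sum_right)
    also have "(\<Sum>i<Suc m. xs i) = (\<Sum>i<length us. 1 / (w - us ! i))"
      unfolding xs_def using sum_if_less[of "length us" "Suc m" "\<lambda>i. 1 / (w - us ! i)"] us(2) dg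
      by (simp only:)
    also have "\<dots> = S"
      unfolding S_def by (simp add: sum_list_sum_nth atLeast0LessThan)
    finally show ?thesis unfolding y_def by (simp add: scaleR_conv_of_real field_simps)
  qed
  ultimately show False using notin unfolding D_def by simp
qed

lemma degree_prod_lin: "degree (\<Prod>a\<leftarrow>as. [:1, - a:]) \<le> length as"
proof (induction as)
  case Nil then show ?case by simp
next
  case (Cons a as)
  have "degree ([:1, -a:] * (\<Prod>a\<leftarrow>as. [:1, - a:])) \<le> degree [:1, -a:] + degree (\<Prod>a\<leftarrow>as. [:1, - a:])"
    by (rule degree_mult_le)
  also have "\<dots> \<le> 1 + length as" using Cons by (intro add_mono) auto
  finally show ?case by simp
qed

lemma grace:
  fixes g :: "complex poly"
  assumes "degree g \<le> length as" "\<forall>a\<in>set as. cmod a \<le> r" "r \<ge> 0"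
    "\<forall>w. cmod w \<le> r \<longrightarrow> poly g w \<noteq> 0"
  shows "B (length as) (\<Prod>a\<leftarrow>as. [:1, -a:]) g \<noteq> 0"
  using assms
proof (induction as arbitrary: g)
  case Nil
  have "poly g 0 \<noteq> 0" using Nil by simp
  then show ?case by (simp add: B_def poly_0_coeff_0)
next
  case (Cons a as)
  have "B (length (a # as)) (\<Prod>a\<leftarrow>a # as. [:1, -a:]) g
      = B (length as) (\<Prod>a\<leftarrow>as. [:1, -a:]) (Aop (-a) (Suc (length as)) g)"
    using B_step[OF degree_prod_lin[of as], of "-a" g] by simp
  moreover have "B (length as) (\<Prod>a\<leftarrow>as. [:1, -a:]) (Aop (-a) (Suc (length as)) g) \<noteq> 0"
  proof (rule Cons.IH)
    show "degree (Aop (- a) (Suc (length as)) g) \<le> length as"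
      using Cons.prems(1) by (intro degree_Aop) simp
    show "\<forall>a\<in>set as. cmod a \<le> r" "0 \<le> r" using Cons.prems by auto
    show "\<forall>w. cmod w \<le> r \<longrightarrow> poly (Aop (- a) (Suc (length as)) g) w \<noteq> 0"
      using Cons.prems by (intro laguerre) auto
  qed
  ultimately show ?case by simp
qed


lemma coeff_diffop: "coeff (diffop n c f) j = (\<Sum>k\<le>n. c k * coeff ((pderiv ^^ k) f) j)"
  unfolding diffop_def by (simp add: coeff_sum)

lemma poly_diffop: "poly (diffop n c f) v = (\<Sum>k\<le>n. c k * poly ((pderiv ^^ k) f) v)"
  unfolding diffop_def by (simp add: poly_sum)

lemma poch_fact: "j \<le> n \<Longrightarrow> fact j * pochhammer (of_nat (Suc j)) (n - j) = (fact n :: complex)"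
proof -
  assume "j \<le> n"
  hence "pochhammer (1::complex) n = pochhammer 1 (j + (n - j))" by simp
  also have "\<dots> = pochhammer 1 j * pochhammer (1 + of_nat j) (n - j)"
    by (rule pochhammer_product')
  finally show ?thesis by (simp add: pochhammer_fact add.commute)
qed

lemma coeff_H:
  "coeff (diffop n c (phi n)) j = (if j \<le> n then c (n - j) / fact j else 0)"
proof -
  have "coeff (diffop n c (phi n)) j =
      (\<Sum>k\<le>n. if k = n - j \<and> j \<le> n then c k * pochhammer (of_nat (Suc j)) k / fact n else 0)"
    unfolding coeff_diffop phi_def coeff_higher_pderiv coeff_monom
    by (intro sum.cong) auto
  also have "\<dots> = (if j \<le> n then c (n - j) * pochhammer (of_nat (Suc j)) (n - j) / fact n else 0)"
    by (cases "j \<le> n") (simp_all add: sum.delta)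
  also have "\<dots> = (if j \<le> n then c (n - j) / fact j else 0)"
  proof (cases "j \<le> n")
    case True
    have "(fact n :: complex) = fact j * pochhammer (of_nat (Suc j)) (n - j)"
      using poch_fact[OF True] by simp
    moreover have "pochhammer (of_nat (Suc j)) (n - j) \<noteq> (0::complex)"
      using calculation by (metis fact_nonzero mult_zero_right)
    ultimately show ?thesis using True by (simp add: field_simps)
  qed simp
  finally show ?thesis .
qed

lemma higher_pderiv_shift:
  "(pderiv ^^ k) (pcompose f [:v, 1:]) = pcompose ((pderiv ^^ k) f) [:v, 1:]"
  by (induction k) (simp_all add: pderiv_pcompose pderiv_pCons)

theorem mainTheorem11:
  fixes n :: nat and c :: "nat \<Rightarrow> complex" and f :: "complex poly" and v :: complex
  assumes "n \<ge> 1"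
    and "bij_betw (diffop n c) (Pn n) (Pn n)"
    and "f \<in> Pn n" and "degree f \<ge> 1"
    and "v \<in> Z (diffop n c f)"
  shows "\<exists>u\<in>Z f. norm (v - u) \<le> root_radius (diffop n c (phi n))"
proof (rule ccontr)
  assume contra: "\<not> (\<exists>u\<in>Z f. norm (v - u) \<le> root_radius (diffop n c (phi n)))"
  define H where "H = diffop n c (phi n)"
  define \<rho> where "\<rho> = root_radius H"
  have c0: "c 0 \<noteq> 0"
  proof
    assume c0: "c 0 = 0"
    have "diffop n c 1 = 0"
      by (rule poly_eqI) (auto simp: coeff_diffop coeff_higher_pderiv c0 coeff_1 intro!: sum.neutral)
    moreover have "diffop n c 0 = 0" by (simp add: diffop_def)
    moreover have "(1::complex poly) \<in> Pn n" "(0::complex poly) \<in> Pn n" by (auto simp: Pn_def)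
    ultimately show False using assms(2) unfolding bij_betw_def inj_on_def
      by (metis one_neq_zero)
  qed
  have cH: "coeff H j = (if j \<le> n then c (n - j) / fact j else 0)" for j
    unfolding H_def by (rule coeff_H)
  have dH: "degree H = n"
  proof (rule antisym)
    show "degree H \<le> n" by (rule degree_le) (simp add: cH)
    show "n \<le> degree H" by (rule le_degree) (simp add: cH c0)
  qed
  have H0: "H \<noteq> 0" using dH assms(1) by auto
  obtain rs where rs: "H = smult (lead_coeff H) (\<Prod>x\<leftarrow>rs. [:-x, 1:])"
    "length rs = degree H" "\<And>r. r \<in> set rs \<Longrightarrow> poly H r = 0"
    using factor_list[OF H0] by blast
  have finZ: "finite (Z H)" unfolding Z_def using poly_roots_finite[OF H0] .
  have rs_le: "cmod r \<le> \<rho>" if "r \<in> set rs" for r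
  proof -
    have "r \<in> Z H" using rs(3)[OF that] by (simp add: Z_def)
    thus ?thesis unfolding \<rho>_def root_radius_def using finZ by (intro Max_ge) auto
  qed
  have rho0: "\<rho> \<ge> 0"
  proof -
    obtain r where "r \<in> set rs" using rs(2) dH assms(1) by (cases rs) auto
    thus ?thesis using rs_le[of r] norm_ge_zero[of r] by linarith
  qed
  define P where "P = (\<Prod>x\<leftarrow>rs. [:1, -x:])"
  define a where "a = lead_coeff H"
  have a0: "a \<noteq> 0" using H0 unfolding a_def by simp
  have refl1: "reflect_poly [:-x, 1:] = [:1, -x:]" for x :: complex
    by (rule poly_eqI) (auto simp: coeff_reflect_poly coeff_pCons split: nat.split)
  have EH: "reflect_poly H = smult a P"
  proof -
    have "reflect_poly H = smult a (reflect_poly (\<Prod>x\<leftarrow>rs. [:-x, 1:]))"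
      by (subst rs(1)) (simp add: reflect_poly_smult a_def)
    also have "reflect_poly (\<Prod>x\<leftarrow>rs. [:-x, 1:]) = P"
      unfolding P_def reflect_poly_prod_list by (simp add: o_def refl1)
    finally show ?thesis .
  qed
  define g where "g = pcompose f [:v, 1:]"
  have dg: "degree g \<le> length rs"
    using assms(3) rs(2) dH unfolding g_def Pn_def by (simp add: degree_pcompose)
  have nog: "\<forall>w. cmod w \<le> \<rho> \<longrightarrow> poly g w \<noteq> 0"
  proof (intro allI impI notI)
    fix w assume w: "cmod w \<le> \<rho>" and g0: "poly g w = 0"
    have "v + w \<in> Z f" using g0 unfolding g_def Z_def by (simp add: poly_pcompose add.commute)
    moreover have "norm (v - (v + w)) \<le> \<rho>" using w by simp
    ultimately show False using contra unfolding \<rho>_def H_def by blast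
  qed
  have "B (length rs) P g \<noteq> 0"
    unfolding P_def using grace[OF dg _ rho0 nog] rs_le by blast
  moreover have "a * B (length rs) P g = 0"
  proof -
    have "a * B (length rs) P g = B n (reflect_poly H) g"
      unfolding EH B_def rs(2) dH by (simp add: sum_distrib_left algebra_simps)
    also have "\<dots> = (\<Sum>k\<le>n. c k * poly ((pderiv ^^ k) f) v)"
    proof (unfold B_def, intro sum.cong refl)
      fix k assume k: "k \<in> {..n}"
      have ck: "coeff (reflect_poly H) k = c k / fact (n - k)"
        using k by (simp add: coeff_reflect_poly dH cH)
      have "poly ((pderiv ^^ k) f) v = poly ((pderiv ^^ k) g) 0"
        unfolding g_def higher_pderiv_shift by (simp add: poly_pcompose)
      also have "\<dots> = fact k * coeff g k"
        by (simp add: poly_0_coeff_0 coeff_higher_pderiv pochhammer_fact[symmetric])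
      finally show "fact k * fact (n - k) * coeff (reflect_poly H) k * coeff g k
          = c k * poly ((pderiv ^^ k) f) v"
        unfolding ck by simp
    qed
    also have "\<dots> = 0" using assms(5) unfolding Z_def poly_diffop[symmetric] by simp
    finally show ?thesis .
  qed
  ultimately show False using a0 by simp
qed

end
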